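(* For any probability distribution $G$ with $\mathrm{supp}(G)\subseteq[0,K]$ for some $K\ge1$, there exists a universal constant $C>0$ such that $\sum_{y=0}^\infty\sqrt{f_G(y)}\le C\sqrt K$.
   Context: $f_G(y)=\int\frac{\theta^ye^{-\theta}}{y!}G(d\theta)$ for $y\in\{0,1,\dots\}$ (the Poisson mixture pmf). *)

theory Defs
  imports "HOL-Probability.Probability"
begin

definition poisson_mixture :: "real measure \<Rightarrow> nat \<Rightarrow> real" where
  "poisson_mixture G y = (\<integral>\<theta>. \<theta> ^ y * exp (- \<theta>) / fact y \<partial>G)"

end

theory Submission
  imports Defs
begin

lemma exp_partial: fixes x::real assumes "0 \<le> x" shows "(\<Sum>n<M. x^n / fact n) \<le> exp x"
proof -
  have s: "summable (\<lambda>n. x^n / fact n)" using summable_exp_generic[of x] by (simp add: divide_inverse mult.commute scaleR_conv_of_real)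
  have "(\<Sum>n<M. x^n / fact n) \<le> (\<Sum>n. x^n / fact n)"
    by (rule sum_le_suminf[OF s]) (use assms in auto)
  also have "\<dots> = exp x" by (simp add: exp_def divide_inverse mult.commute scaleR_conv_of_real)
  finally show ?thesis .
qed

lemma pois_partial: fixes x::real assumes "0 \<le> x" shows "(\<Sum>n<M. x^n * exp (-x) / fact n) \<le> 1"
proof -
  have "(\<Sum>n<M. x^n * exp (-x) / fact n) = exp (-x) * (\<Sum>n<M. x^n / fact n)"
    by (simp add: sum_distrib_left mult_ac)
  also have "\<dots> \<le> exp (-x) * exp x" using exp_partial[OF assms] by (intro mult_left_mono) auto
  also have "\<dots> = 1" by (simp add: exp_minus)
  finally show ?thesis .
qed

lemma main_bound:
  fixes K :: real and G :: "real measure"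
  assumes K: "K \<ge> 1" and P: "prob_space G" and S: "sets G = sets borel" and M1: "measure G {0..K} = 1"
  shows "summable (\<lambda>y. sqrt (poisson_mixture G y)) \<and>
             (\<Sum>y. sqrt (poisson_mixture G y)) \<le> 5 * sqrt K"
proof -
  interpret prob_space G by (rule P)
  define f where "f = poisson_mixture G"
  define p where "p = (\<lambda>(y::nat) (t::real). t ^ y * exp (- t) / fact y)"
  have AE: "AE t in G. t \<in> {0..K}" using AE_prob_1[of "{0..K}"] M1 by blast
  have meas: "p y \<in> borel_measurable G" for y
    unfolding p_def using S measurable_cong_sets by (fastforce intro!: borel_measurable_continuous_onI continuous_intros)
  have pbound: "0 \<le> p y t \<and> p y t \<le> 1" if "0 \<le> t" for y t
  proof
    show "0 \<le> p y t" using that by (simp add: p_def)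
    have "(\<Sum>n<Suc y. p n t) \<le> 1" using pois_partial[OF that, of "Suc y"] by (simp add: p_def)
    moreover have "p y t \<le> (\<Sum>n<Suc y. p n t)"
      by (rule member_le_sum) (use that in \<open>auto simp: p_def\<close>)
    ultimately show "p y t \<le> 1" by simp
  qed
  have int: "integrable G (p y)" for y
    by (rule integrable_const_bound[where B=1]) (use AE pbound meas in \<open>auto elim!: eventually_mono\<close>)
  have fdef: "f y = integral\<^sup>L G (p y)" for y unfolding f_def p_def poisson_mixture_def by simp
  have fnn: "0 \<le> f y" for y
    unfolding fdef by (rule integral_nonneg_AE) (use AE pbound in \<open>auto elim!: eventually_mono\<close>)
  have fle1: "f y \<le> 1" for y
  proof -
    have "f y \<le> integral\<^sup>L G (\<lambda>_. 1)" unfolding fdef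
      by (rule integral_mono_AE[OF int]) (use AE pbound in \<open>auto elim!: eventually_mono\<close>)
    thus ?thesis by (simp add: prob_space)
  qed
  have fsum: "(\<Sum>y<N. f y) \<le> 1" for N
  proof -
    have "(\<Sum>y<N. f y) = integral\<^sup>L G (\<lambda>t. \<Sum>y<N. p y t)" unfolding fdef
      using Bochner_Integration.integral_sum[where I="{..<N}" and f=p and M=G] int by simp
    also have "\<dots> \<le> integral\<^sup>L G (\<lambda>_. 1)"
      by (rule integral_mono_AE) (use AE int pois_partial in \<open>auto elim!: eventually_mono simp: p_def\<close>)
    finally show ?thesis by (simp add: prob_space)
  qed
  have fstep: "f (Suc y) \<le> K / (Suc y) * f y" for y
  proof -
    have "f (Suc y) \<le> integral\<^sup>L G (\<lambda>t. K / (Suc y) * p y t)" unfolding fdef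
    proof (rule integral_mono_AE[OF int])
      show "integrable G (\<lambda>t. K / (Suc y) * p y t)" using int by simp
      show "AE t in G. p (Suc y) t \<le> K / (Suc y) * p y t"
        using AE
      proof (rule eventually_mono)
        fix t assume t: "t \<in> {0..K}"
        have "p (Suc y) t = t / Suc y * p y t" by (simp add: p_def field_simps)
        also have "\<dots> \<le> K / (Suc y) * p y t" using t pbound[of t y]
          by (intro mult_right_mono divide_right_mono) auto
        finally show "p (Suc y) t \<le> K / (Suc y) * p y t" .
      qed
    qed
    also have "\<dots> = K / (Suc y) * f y" by (simp add: fdef)
    finally show ?thesis .
  qed
  define M where "M = nat \<lceil>4 * K\<rceil>"
  have M1': "4 * K \<le> real M" unfolding M_def by linarith
  have M2: "real M \<le> 5 * K" unfolding M_def using K by linarith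
  define a where "a = (\<lambda>y. sqrt (f y))"
  have ann: "0 \<le> a y" for y unfolding a_def using fnn[of y] by simp
  have astep: "a (Suc y) \<le> a y / 2" if "M \<le> y" for y
  proof -
    have "real M \<le> real y" using that by (rule of_nat_mono)
    hence y4: "4 * K \<le> real (Suc y)" using M1' by simp
    have pos: "0 < real (Suc y)" by (rule of_nat_0_less_iff[THEN iffD2]) simp
    have "K / real (Suc y) \<le> 1/4" using y4 pos by (simp add: pos_divide_le_eq)
    hence "K / real (Suc y) * f y \<le> 1/4 * f y" using fnn[of y] by (rule mult_right_mono)
    hence "f (Suc y) \<le> f y / 4" using fstep[of y] by linarith
    hence "sqrt (f (Suc y)) \<le> sqrt (f y / 4)" by simp
    also have "\<dots> = sqrt (f y) / 2" by (simp add: real_sqrt_divide)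
    finally show ?thesis unfolding a_def .
  qed
  have ageo: "a (n + M) \<le> (1/2)^n" for n
  proof (induction n)
    case 0 show ?case using fle1[of M] by (simp add: a_def)
  next
    case (Suc n) 
    have "a (Suc n + M) \<le> a (n + M) / 2" using astep[of "n+M"] by simp
    also have "\<dots> \<le> (1/2)^Suc n" using Suc by simp
    finally show ?case .
  qed
  have sg: "summable (\<lambda>n::nat. (1/2::real)^n)" by (rule summable_geometric) simp
  have sa': "summable (\<lambda>n. a (n + M))"
    by (rule summable_comparison_test[OF _ sg]) (use ageo ann in auto)
  hence sa: "summable a" by simp
  have tail: "(\<Sum>n. a (n + M)) \<le> 2"
  proof -
    have "(\<Sum>n. a (n + M)) \<le> (\<Sum>n. (1/2::real)^n)" by (rule suminf_le[OF ageo sa' sg])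
    also have "\<dots> = 2" using suminf_geometric[of "1/2::real"] by simp
    finally show ?thesis .
  qed
  have sK: "sqrt K > 0" using K by simp
  have amgm: "a y \<le> (f y * sqrt K + 1 / sqrt K) / 2" for y
  proof -
    have "0 \<le> (a y * sqrt K - 1)^2" by simp
    also have "(a y * sqrt K - 1)^2 = (a y)^2 * (sqrt K)^2 - 2 * a y * sqrt K + 1"
      by (simp add: power2_diff power_mult_distrib)
    also have "(sqrt K)^2 = K" using K by simp
    also have "(a y)^2 = f y" using fnn[of y] by (simp add: a_def)
    finally have h: "2 * a y * sqrt K \<le> f y * K + 1" by simp
    have "f y * K = f y * sqrt K * sqrt K" using K by (simp add: mult.assoc)
    with h have "2 * a y * sqrt K \<le> f y * sqrt K * sqrt K + 1" by simp
    hence "a y * sqrt K \<le> ((f y * sqrt K + 1 / sqrt K) / 2) * sqrt K"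
      using sK by (simp add: algebra_simps)
    thus ?thesis using sK by (simp add: mult_le_cancel_right)
  qed
  have head: "(\<Sum>y<M. a y) \<le> 3 * sqrt K"
  proof -
    have "(\<Sum>y<M. a y) \<le> (\<Sum>y<M. (f y * sqrt K + 1 / sqrt K) / 2)" by (rule sum_mono) (rule amgm)
    also have "\<dots> = (\<Sum>y<M. f y * sqrt K + 1 / sqrt K) / 2" by (rule sum_divide_distrib[symmetric])
    also have "(\<Sum>y<M. f y * sqrt K + 1 / sqrt K) = (\<Sum>y<M. f y * sqrt K) + (\<Sum>y<M. 1 / sqrt K)"
      by (rule sum.distrib)
    also have "(\<Sum>y<M. f y * sqrt K) = (\<Sum>y<M. f y) * sqrt K" by (rule sum_distrib_right[symmetric])
    also have "(\<Sum>y<M. 1 / sqrt K) = M / sqrt K" by simp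
    also have "((\<Sum>y<M. f y) * sqrt K + M / sqrt K) / 2 \<le> (1 * sqrt K + 5 * K / sqrt K) / 2"
    proof -
      have A: "(\<Sum>y<M. f y) * sqrt K \<le> 1 * sqrt K" by (rule mult_right_mono[OF fsum]) (use sK in simp)
      have B: "M / sqrt K \<le> 5 * K / sqrt K" by (rule divide_right_mono[OF M2]) (use sK in simp)
      show ?thesis by (rule divide_right_mono[OF add_mono[OF A B]]) simp
    qed
    also have "5 * K / sqrt K = 5 * sqrt K"
      by (subst times_divide_eq_right[symmetric], subst real_div_sqrt) (use K in auto)
    finally show ?thesis by simp
  qed
  have "(\<Sum>y. a y) = (\<Sum>n. a (n + M)) + (\<Sum>y<M. a y)" by (rule suminf_split_initial_segment[OF sa])
  also have "\<dots> \<le> 2 + 3 * sqrt K" using tail head by simp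
  also have "\<dots> \<le> 5 * sqrt K" using K by simp
  finally show ?thesis using sa unfolding a_def f_def by simp
qed

theorem lemma7:
  shows "\<exists>C>0. \<forall>K::real. \<forall>G::real measure.
           K \<ge> 1 \<longrightarrow> prob_space G \<longrightarrow> sets G = sets borel \<longrightarrow>
           measure G {0..K} = 1 \<longrightarrow>
             summable (\<lambda>y. sqrt (poisson_mixture G y)) \<and>
             (\<Sum>y. sqrt (poisson_mixture G y)) \<le> C * sqrt K"
  by (rule exI[of _ 5]) (simp add: main_bound)

end
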